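(* There exist constants $C_1,C_2>0$ such that for all $(\lambda,\zeta)\in\mathbb{S}\times(\mathbb{Z}^2\setminus\{0\})$, $$\frac{C_1}{\langle\omega\rangle^2}\le\Big|\int_0^a(\omega^2-\nu\partial_{zz})^{-1}(1)\,dz\Big|\le\frac{C_2}{\langle\omega\rangle^2},$$ where $(\omega^2-\nu\partial_{zz})^{-1}(1)$ denotes the solution $g$ on $(0,a)$ of $\omega^2g-\nu g''=1$, $g(0)=g(a)=0$.
   Context: Fix $a>0$, $\nu>0$, $\alpha\in\mathbb{R}$, $\beta,\gamma>0$, $\Omega=\mathbb{T}^2\times(0,a)$, $\mathbb{T}^2=(\mathbb{R}/2\pi\mathbb{Z})^2$. Let $\mathcal{V}=\mathcal{V}_1\times\mathcal{V}_2$, where $\mathcal{V}_1$ is the closure in $H^1(\Omega)^2$ of smooth $(u,v)$ periodic in $x,y$, vanishing at $z=0,a$, with $\int_0^a(\partial_xu+\partial_yv)dz=0$, and $\mathcal{V}_2$ the closure in $H^1(\Omega)$ of smooth $\theta$ periodic in $x,y$ vanishing at $z=0,a$. For $X=(u,v,\theta),X'=(u',v',\theta')\in\mathcal{V}$ put $(X,X')_{\mathcal{H}}=\int_\Omega(u\bar u'+v\bar v'+\frac\beta\gamma\theta\bar\theta')$, $(X,X')_{\mathcal{V}}=\int_\Omega(\nabla u\cdot\nabla\bar u'+\nabla v\cdot\nabla\bar v'+\frac\beta\gamma\nabla\theta\cdot\nabla\bar\theta')$, $w=-\int_0^z(\partial_xu+\partial_yv)$, $w'=-\int_0^z(\partial_xu'+\partial_yv')$,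 $B(X,X')=-\int_\Omega\theta\bar w'+\int_\Omega w\bar\theta'$, $C(X,X')=-\int_\Omega v\bar u'+\int_\Omega u\bar v'$, $\langle PX,X'\rangle=\nu(X,X')_{\mathcal{V}}+\beta B(X,X')+\alpha C(X,X')$, and $\mathbb{V}_P=\{\lambda\in\mathbb{C}:\exists X\in\mathcal{V}\setminus\{0\},\ \lambda(X,X')_{\mathcal{H}}+\langle PX,X'\rangle=0\ \forall X'\in\mathcal{V}\}$. Let $\mathbb{S}=\{-\delta_2-\mu_1+i\mu_2:(\mu_1,\mu_2)\in\mathbb{R}^2,\ |\mu_2|\ge\mu_1/\delta_1\}$, where $\delta_1>0$ is small enough that $\mathbb{S}\cap\mathbb{V}_P=\emptyset$ and $\delta_2<\min(\frac{\nu\pi^2}{2a^2},\frac\nu2)$. For $\lambda\in\mathbb{S}$, $\zeta\in\mathbb{Z}^2$: $\omega^2=\lambda+\nu|\zeta|^2$, $\langle\zeta\rangle=1+|\zeta|$, $\langle\omega\rangle^2=|\lambda|+\langle\zeta\rangle^2$. *)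

theory Defs
  imports "HOL-Analysis.Analysis"
begin

definition sectorS :: "real \<Rightarrow> real \<Rightarrow> complex set" where
  "sectorS d1 d2 = {complex_of_real (- d2 - mu1) + \<i> * complex_of_real mu2 | mu1 mu2.
                      \<bar>mu2\<bar> \<ge> mu1 / d1}"

definition zeta_sq :: "int \<times> int \<Rightarrow> real" where
  "zeta_sq z = real_of_int (fst z)^2 + real_of_int (snd z)^2"

definition omega_sq :: "real \<Rightarrow> complex \<Rightarrow> int \<times> int \<Rightarrow> complex" where
  "omega_sq nu lam z = lam + complex_of_real (nu * zeta_sq z)"

definition jbr_zeta :: "int \<times> int \<Rightarrow> real" where
  "jbr_zeta z = 1 + sqrt (zeta_sq z)"

definition jbr_omega_sq :: "complex \<Rightarrow> int \<times> int \<Rightarrow> real" where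
  "jbr_omega_sq lam z = cmod lam + (jbr_zeta z)^2"

definition dirichlet_sol :: "real \<Rightarrow> real \<Rightarrow> complex \<Rightarrow> (real \<Rightarrow> complex) \<Rightarrow> bool" where
  "dirichlet_sol a nu w g \<longleftrightarrow>
     (\<exists>g' g''. (\<forall>x\<in>{0..a}. (g has_vector_derivative g' x) (at x within {0..a}))
             \<and> continuous_on {0..a} g'
             \<and> (\<forall>x\<in>{0<..<a}. (g' has_vector_derivative g'' x) (at x)
                              \<and> w * g x - complex_of_real nu * g'' x = 1)
             \<and> g 0 = 0 \<and> g a = 0)"

end

theory Submission
  imports Defs
begin

lemma exp_ka_gt: 
  fixes k :: complex and a :: real
  assumes "a > 0" "Re k > 0"
  shows "cmod (exp (k * of_real a)) > 1"
proof -
  have "Re (k * of_real a) > 0" using assms by simp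
  then show ?thesis by simp
qed

lemma explicit_sol:
  fixes k w :: complex and a nu :: real
  assumes a: "a > 0" and nu: "nu > 0" and kw: "of_real nu * k^2 = w" and k: "Re k > 0"
  defines "D \<equiv> 1 + exp (k * of_real a)"
  shows "dirichlet_sol a nu w (\<lambda>x. (1 - (exp (k * of_real x) + exp (k * (of_real a - of_real x))) / D) / w)"
proof -
  have k0: "k \<noteq> 0" using k by auto
  have w0: "w \<noteq> 0" using kw k0 nu by auto
  have D0: "D \<noteq> 0"
  proof
    assume "D = 0"
    then have "exp (k * of_real a) = -1" unfolding D_def by (simp add: add_eq_0_iff)
    then have "cmod (exp (k * of_real a)) = 1" by simp
    with exp_ka_gt[OF a k] show False by linarith
  qed
  define Gc where "Gc c = (1 - (exp (k * c) + exp (k * (of_real a - c))) / D) / w" for c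
  define G1 where "G1 c = - ((k * exp (k * c) - k * exp (k * (of_real a - c))) / D) / w" for c
  define G2 where "G2 c = - ((k^2 * exp (k * c) + k^2 * exp (k * (of_real a - c))) / D) / w" for c
  have dG: "(Gc has_field_derivative G1 c) (at c)" for c
    unfolding Gc_def G1_def
    using D0 w0 by (auto intro!: derivative_eq_intros simp: field_simps)
  have dG1: "(G1 has_field_derivative G2 c) (at c)" for c
    unfolding G1_def G2_def
    using D0 w0 by (auto intro!: derivative_eq_intros simp: field_simps power2_eq_square)
  show ?thesis
    unfolding dirichlet_sol_def
  proof (rule exI[of _ "\<lambda>x. G1 (of_real x)"], rule exI[of _ "\<lambda>x. G2 (of_real x)"], intro conjI ballI)
    fix x :: real
    show "((\<lambda>x. (1 - (exp (k * of_real x) + exp (k * (of_real a - of_real x))) / D) / w)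
       has_vector_derivative G1 (of_real x)) (at x within {0..a})"
      using has_vector_derivative_real_field[OF dG, of x "{0..a}"] by (simp add: Gc_def)
  next
    show "continuous_on {0..a} (\<lambda>x. G1 (complex_of_real x))"
      unfolding G1_def by (intro continuous_intros) (use D0 w0 in auto)
  next
    fix x :: real assume "x \<in> {0<..<a}"
    show "((\<lambda>x. G1 (complex_of_real x)) has_vector_derivative G2 (of_real x)) (at x)"
      using has_vector_derivative_real_field[OF dG1, of x UNIV] by simp
  next
    fix x :: real assume "x \<in> {0<..<a}"
    have "w * Gc (of_real x) - of_real nu * G2 (of_real x) = 1"
      unfolding Gc_def G2_def using w0 D0 kw[symmetric]
      by (simp add: field_simps)
    then show "w * ((1 - (exp (k * of_real x) + exp (k * (of_real a - of_real x))) / D) / w) -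
          of_real nu * G2 (of_real x) = 1" by (simp add: Gc_def)
  next
    show "(1 - (exp (k * of_real 0) + exp (k * (of_real a - of_real 0))) / D) / w = 0"
      using D0 by (simp add: D_def add.commute)
    show "(1 - (exp (k * of_real a) + exp (k * (of_real a - of_real a))) / D) / w = 0"
      using D0 by (simp add: D_def add.commute)
  qed
qed

lemma const_on_interval:
  fixes U :: "real \<Rightarrow> complex"
  assumes "a > 0" "continuous_on {0..a} U"
    and "\<And>x. x \<in> {0<..<a} \<Longrightarrow> (U has_vector_derivative 0) (at x)"
    and "x \<in> {0..a}"
  shows "U x = U 0"
proof (rule has_derivative_zero_unique_strong_interval[of "{0,a}" 0 a U])
  show "finite {0, a}" by simp
  show "continuous_on {0..a} U" by fact
  show "U 0 = U 0" by simp
  show "x \<in> {0..a}" by fact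
  fix y assume y: "y \<in> {0..a} - {0, a}"
  then have y': "y \<in> {0<..<a}" by auto
  have "at y within {0..a} = at y" using y' by (simp add: at_within_Icc_at)
  then show "(U has_derivative (\<lambda>h. 0)) (at y within {0..a})"
    using assms(3)[OF y'] by (simp add: has_vector_derivative_def)
qed

lemma dir_unique:
  fixes k w :: complex and a nu :: real
  assumes a: "a > 0" and nu: "nu > 0" and kw: "of_real nu * k^2 = w" and k: "Re k > 0"
    and s1: "dirichlet_sol a nu w g1" and s2: "dirichlet_sol a nu w g2"
    and x: "x \<in> {0..a}"
  shows "g1 x = g2 x"
proof -
  obtain g1' g1'' where d1: "\<forall>x\<in>{0..a}. (g1 has_vector_derivative g1' x) (at x within {0..a})"
    and c1: "continuous_on {0..a} g1'"
    and e1: "\<forall>x\<in>{0<..<a}. (g1' has_vector_derivative g1'' x) (at x) \<and> w * g1 x - of_real nu * g1'' x = 1"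
    and b1: "g1 0 = 0" "g1 a = 0"
    using s1 unfolding dirichlet_sol_def by blast
  obtain g2' g2'' where d2: "\<forall>x\<in>{0..a}. (g2 has_vector_derivative g2' x) (at x within {0..a})"
    and c2: "continuous_on {0..a} g2'"
    and e2: "\<forall>x\<in>{0<..<a}. (g2' has_vector_derivative g2'' x) (at x) \<and> w * g2 x - of_real nu * g2'' x = 1"
    and b2: "g2 0 = 0" "g2 a = 0"
    using s2 unfolding dirichlet_sol_def by blast
  define h where "h x = g1 x - g2 x" for x
  define h' where "h' x = g1' x - g2' x" for x
  define h'' where "h'' x = g1'' x - g2'' x" for x
  have k0: "k \<noteq> 0" using k by auto
  have hd: "(h has_vector_derivative h' x) (at x within {0..a})" if "x \<in> {0..a}" for x
    unfolding h_def h'_def using d1 d2 that by (auto intro!: derivative_eq_intros)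
  have hc: "continuous_on {0..a} h" using hd by (rule continuous_on_vector_derivative)
  have h'c: "continuous_on {0..a} h'" unfolding h'_def using c1 c2 by (intro continuous_intros)
  have hdi: "(h has_vector_derivative h' x) (at x)" if "x \<in> {0<..<a}" for x
    using hd[of x] that by (simp add: at_within_Icc_at)
  have h'd: "(h' has_vector_derivative h'' x) (at x)" if "x \<in> {0<..<a}" for x
    unfolding h'_def h''_def using e1 e2 that by (auto intro!: derivative_eq_intros)
  have heq: "h'' x = k^2 * h x" if "x \<in> {0<..<a}" for x
  proof -
    have "w * h x - of_real nu * h'' x = 0"
      using e1 e2 that unfolding h_def h''_def by (auto simp: algebra_simps)
    then have "of_real nu * h'' x = of_real nu * (k^2 * h x)" using kw[symmetric] by (auto simp: algebra_simps)
    then show ?thesis using nu by simp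
  qed
  have h0: "h 0 = 0" "h a = 0" using b1 b2 unfolding h_def by auto
  have ed: "((\<lambda>x. exp (c * of_real x)) has_vector_derivative c * exp (c * of_real x)) (at x)" for c :: complex and x :: real
  proof -
    have "((\<lambda>y. exp (c * y)) has_field_derivative c * exp (c * of_real x)) (at (of_real x))"
      by (auto intro!: derivative_eq_intros)
    from has_vector_derivative_real_field[OF this, where s=UNIV] show ?thesis by simp
  qed
  define U where "U x = (h' x - k * h x) * exp (k * of_real x)" for x
  define V where "V x = (h' x + k * h x) * exp (- k * of_real x)" for x
  have Uc: "U y = U 0" if "y \<in> {0..a}" for y
  proof (rule const_on_interval[OF a _ _ that])
    show "continuous_on {0..a} U" unfolding U_def using hc h'c by (intro continuous_intros)
    fix x assume x: "x \<in> {0<..<a}"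
    have "(U has_vector_derivative ((h' x - k * h x) * (k * exp (k * of_real x)) + (h'' x - k * h' x) * exp (k * of_real x))) (at x)"
      unfolding U_def
      by (rule has_vector_derivative_mult[OF has_vector_derivative_diff[OF h'd[OF x] has_vector_derivative_mult_right[OF hdi[OF x]]] ed])
    then show "(U has_vector_derivative 0) (at x)"
      using heq[OF x] by (simp add: algebra_simps power2_eq_square)
  qed
  have Vc: "V y = V 0" if "y \<in> {0..a}" for y
  proof (rule const_on_interval[OF a _ _ that])
    show "continuous_on {0..a} V" unfolding V_def using hc h'c by (intro continuous_intros)
    fix x assume x: "x \<in> {0<..<a}"
    have "(V has_vector_derivative ((h' x + k * h x) * (- k * exp (- k * of_real x)) + (h'' x + k * h' x) * exp (- k * of_real x))) (at x)"
      unfolding V_def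
      by (rule has_vector_derivative_mult[OF has_vector_derivative_add[OF h'd[OF x] has_vector_derivative_mult_right[OF hdi[OF x]]] ed])
    then show "(V has_vector_derivative 0) (at x)"
      using heq[OF x] by (simp add: algebra_simps power2_eq_square)
  qed
  have U0: "U 0 = h' 0" and V0: "V 0 = h' 0" using h0 by (auto simp: U_def V_def)
  have aa: "a \<in> {0..a}" using a by auto
  have Ua: "h' a * exp (k * of_real a) = h' 0" using Uc[OF aa] U0 h0 by (simp add: U_def)
  have Va: "h' a * exp (- k * of_real a) = h' 0" using Vc[OF aa] V0 h0 by (simp add: V_def)
  have n1: "cmod (exp (k * of_real a)) > 1" using a k by simp
  have n2: "cmod (exp (- k * of_real a)) < 1" using a k by simp
  have "h' a = 0"
  proof (rule ccontr)
    assume "h' a \<noteq> 0"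
    with Ua Va have "exp (k * of_real a) = exp (- k * of_real a)"
      by (metis mult_left_cancel)
    with n1 n2 show False by simp
  qed
  then have "h' 0 = 0" using Ua by simp
  then have "U x = 0" "V x = 0" using Uc[OF x] Vc[OF x] U0 V0 by auto
  then have "h' x - k * h x = 0" "h' x + k * h x = 0" by (auto simp: U_def V_def)
  then have "2 * k * h x = 0" by (simp add: algebra_simps)
  then have "h x = 0" using k0 by simp
  then show ?thesis by (simp add: h_def)
qed

lemma La: fixes x :: real assumes "x > 0" shows "2 * x * exp (-x) < 1 - exp (-x)^2"
proof -
  let ?f = "\<lambda>u. exp u - exp (-u) - 2 * u"
  have "?f 0 < ?f x"
  proof (rule DERIV_pos_imp_increasing_open[OF assms])
    fix u :: real assume u: "0 < u" "u < x"
    have "(?f has_real_derivative (exp u + exp (-u) - 2)) (at u)"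
      by (auto intro!: derivative_eq_intros)
    moreover have "exp u + exp (-u) - 2 > 0"
    proof -
      have e: "exp u > 1" using u by simp
      have "exp u + exp (-u) - 2 = (exp u - 1)^2 / exp u"
        by (simp add: exp_minus field_simps power2_eq_square)
      also have "\<dots> > 0" using e by simp
      finally show ?thesis .
    qed
    ultimately show "\<exists>y. (?f has_real_derivative y) (at u) \<and> 0 < y" by blast
  next
    show "continuous_on {0..x} ?f" by (intro continuous_intros)
  qed
  then have "2 * x < exp x - exp (-x)" by simp
  then have "2 * x * exp (-x) < (exp x - exp (-x)) * exp (-x)"
    by (simp add: mult_strict_right_mono)
  also have "\<dots> = 1 - exp (-x)^2" by (simp add: algebra_simps power2_eq_square flip: exp_add)
  finally show ?thesis .
qed

lemma Lb: fixes x :: real assumes "x > 0" shows "2 * (1 - exp (-x)) < x * (1 + exp (-x))"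
proof -
  let ?f = "\<lambda>u. u * (1 + exp (-u)) - 2 * (1 - exp (-u))"
  have "?f 0 < ?f x"
  proof (rule DERIV_pos_imp_increasing_open[OF assms])
    fix u :: real assume u: "0 < u" "u < x"
    have "(?f has_real_derivative (1 - exp (-u) * (1 + u))) (at u)"
      by (auto intro!: derivative_eq_intros simp: algebra_simps)
    moreover have "1 - exp (-u) * (1 + u) > 0"
    proof -
      have "1 + u < exp u" using exp_minus_greater[of "-u"] u by simp
      then have "exp (-u) * (1 + u) < exp (-u) * exp u" by simp
      then show ?thesis by (simp flip: exp_add)
    qed
    ultimately show "\<exists>y. (?f has_real_derivative y) (at u) \<and> 0 < y" by blast
  next
    show "continuous_on {0..x} ?f" by (intro continuous_intros)
  qed
  then show ?thesis by simp
qed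

lemma F_nonzero:
  fixes k :: complex and a :: real
  assumes a: "a > 0" and k: "Re k > 0"
  shows "of_real a - 2 * (exp (k * of_real a) - 1) / (k * (1 + exp (k * of_real a))) \<noteq> 0"
proof
  assume F0: "of_real a - 2 * (exp (k * of_real a) - 1) / (k * (1 + exp (k * of_real a))) = 0"
  define t where "t = k * of_real a"
  have k0: "k \<noteq> 0" using k by auto
  have D0: "1 + exp t \<noteq> 0"
  proof
    assume "1 + exp t = 0"
    then have "exp t = -1" by (simp add: add_eq_0_iff)
    then have "cmod (exp t) = 1" by simp
    moreover have "Re t > 0" using a k by (simp add: t_def)
    ultimately show False by simp
  qed
  have "of_real a = 2 * (exp t - 1) / (k * (1 + exp t))" using F0 by (simp add: t_def)
  then have "of_real a * (k * (1 + exp t)) = 2 * (exp t - 1)" using k0 D0 by (simp add: eq_divide_eq)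
  then have "t * (1 + exp t) = 2 * (exp t - 1)" by (simp add: t_def algebra_simps)
  then have "t * (1 + exp t) * exp (-t) = 2 * (exp t - 1) * exp (-t)" by simp
  then have eq: "t * (1 + exp (-t)) = 2 * (1 - exp (-t))"
    by (simp add: algebra_simps flip: exp_add)
  define x where "x = Re t"
  define y where "y = Im t"
  define q where "q = exp (-x)"
  have x0: "x > 0" using a k by (simp add: x_def t_def)
  have q0: "q > 0" "q < 1" using x0 by (auto simp: q_def)
  define c where "c = Re (exp (-t))"
  define d where "d = Im (exp (-t))"
  have cd: "c = q * cos y" "d = - q * sin y"
    by (simp_all add: c_def d_def q_def x_def y_def Re_exp Im_exp)
  have R: "x * (1 + c) - y * d = 2 * (1 - c)"
    using arg_cong[OF eq, of Re] by (simp add: c_def d_def x_def y_def)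
  have I: "y * (1 + c) + x * d = - 2 * d"
    using arg_cong[OF eq, of Im] by (simp add: c_def d_def x_def y_def)
  define N where "N = (1 + c)^2 + d^2"
  have A0: "x * N = 2 * (1 - c^2 - d^2)"
    unfolding N_def using R I by algebra
  have B0: "y * N = - 4 * d"
    unfolding N_def using R I by algebra
  have cd2: "c^2 + d^2 = q^2"
    unfolding cd by (simp add: power_mult_distrib algebra_simps flip: distrib_left) 
  have N': "N = 1 + 2 * q * cos y + q^2" unfolding N_def using cd cd2
    by (simp add: power2_eq_square algebra_simps)
  have A: "x * N = 2 * (1 - q^2)" using A0 cd2 by simp
  have B: "y * N = 4 * q * sin y" using B0 cd by simp
  have yq: "y * (1 - q^2) = 2 * x * q * sin y"
    using A B by algebra
  have y0: "y = 0"
  proof (rule ccontr)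
    assume yne: "y \<noteq> 0"
    have La': "2 * x * q < 1 - q^2" using La[OF x0] by (simp add: q_def)
    have pos: "1 - q^2 > 0" using La' q0 x0 by (smt (verit) mult_pos_pos)
    have "\<bar>y\<bar> * (1 - q^2) = 2 * x * q * \<bar>sin y\<bar>"
      using arg_cong[OF yq, of abs] q0 x0 pos by (simp add: abs_mult)
    also have "\<dots> \<le> 2 * x * q * \<bar>y\<bar>"
      using abs_sin_x_le_abs_x[of y] q0 x0 by (intro mult_left_mono) auto
    finally have "\<bar>y\<bar> * (1 - q^2) \<le> \<bar>y\<bar> * (2 * x * q)" by (simp add: algebra_simps)
    then have "1 - q^2 \<le> 2 * x * q" using yne by simp
    with La' show False by simp
  qed
  then have "x * (1 + q)^2 = 2 * (1 - q) * (1 + q)"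
    using A N' by (simp add: power2_eq_square algebra_simps)
  then have "x * (1 + q) = 2 * (1 - q)" using q0 by (simp add: power2_eq_square)
  with Lb[OF x0] show False by (simp add: q_def)
qed

lemma region:
  fixes k :: complex and d1 :: real
  assumes d1: "d1 > 0" and k0: "Re k \<ge> 0" and r: "1/2 \<le> Re (k^2) + d1 * \<bar>Im (k^2)\<bar>"
  shows "Re k \<ge> 1 / (2 + 4 * d1)" "cmod k \<le> (2 + 2 * d1) * Re k"
proof -
  define p where "p = Re k"
  define q where "q = Im k"
  define aq where "aq = \<bar>q\<bar>"
  have p0: "p \<ge> 0" using k0 by (simp add: p_def)
  have aq0: "aq \<ge> 0" by (simp add: aq_def)
  have q2: "q^2 = aq * aq" by (simp add: aq_def power2_eq_square)
  have Re2: "Re (k^2) = p * p - q * q" by (simp add: p_def q_def power2_eq_square)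
  have Im2: "\<bar>Im (k^2)\<bar> = 2 * p * aq" using p0 by (simp add: p_def q_def aq_def power2_eq_square abs_mult)
  have r': "1/2 \<le> p * p - aq * aq + 2 * d1 * p * aq"
    using r unfolding Re2 Im2 using q2 by (simp add: power2_eq_square)
  have dp: "d1 * p \<ge> 0" using d1 p0 by simp
  have qb: "aq \<le> (1 + 2 * d1) * p"
  proof (rule ccontr)
    assume "\<not> ?thesis"
    then have h: "aq > (1 + 2 * d1) * p" by simp
    have e: "(1 + 2 * d1) * p = p + 2 * (d1 * p)" by (simp add: distrib_right)
    have h1: "aq \<ge> p" using h dp e by linarith
    have A: "aq * aq \<ge> aq * ((1 + 2 * d1) * p)" using h aq0 by (intro mult_left_mono) auto
    have B: "aq * p \<ge> p * p" using h1 p0 by (rule mult_right_mono)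
    have C: "aq * ((1 + 2 * d1) * p) = aq * p + 2 * d1 * p * aq" by (simp add: ring_distribs)
    show False using A B C r' by linarith
  qed
  have D: "2 * d1 * p * aq \<le> 2 * d1 * p * ((1 + 2 * d1) * p)"
    using qb d1 p0 by (intro mult_left_mono) auto
  have aqq: "aq * aq \<ge> 0" using aq0 by simp
  have "1/2 \<le> p * p + 2 * d1 * p * ((1 + 2 * d1) * p)" using r' D aqq by linarith
  also have "\<dots> = (p * p) * (1 + 2 * d1 + 4 * d1 * d1)" by (simp add: ring_distribs)
  also have "\<dots> \<le> (p * p) * ((1 + 2 * d1) * (1 + 2 * d1))"
    using d1 by (intro mult_left_mono) (auto simp: ring_distribs)
  finally have hp: "1/2 \<le> (p * (1 + 2 * d1)) * (p * (1 + 2 * d1))" by (simp add: ac_simps)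
  show "Re k \<ge> 1 / (2 + 4 * d1)"
  proof (rule ccontr)
    assume "\<not> ?thesis"
    then have "p < 1 / (2 + 4 * d1)" by (simp add: p_def)
    then have lt: "p * (1 + 2 * d1) < 1/2" using d1 by (simp add: field_simps)
    have ge: "p * (1 + 2 * d1) \<ge> 0" using p0 d1 by simp
    have "(p * (1 + 2 * d1)) * (p * (1 + 2 * d1)) < (1/2) * (1/2)"
      using lt ge by (intro mult_strict_mono') auto
    with hp show False by simp
  qed
  have "cmod k \<le> \<bar>p\<bar> + aq" using cmod_le[of k] by (simp add: p_def q_def aq_def)
  also have "\<dots> \<le> (2 + 2 * d1) * p" using qb p0 dp by (simp add: ring_distribs)
  finally show "cmod k \<le> (2 + 2 * d1) * Re k" by (simp add: p_def)
qed

definition Ff :: "real \<Rightarrow> complex \<Rightarrow> complex" where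
  "Ff a k = of_real a - 2 * (exp (k * of_real a) - 1) / (k * (1 + exp (k * of_real a)))"

lemma F_bounds:
  fixes a d1 :: real
  assumes a: "a > 0" and d1: "d1 > 0"
  shows "\<exists>m M. 0 < m \<and> 0 < M \<and> (\<forall>k. Re k \<ge> 0 \<longrightarrow> 1/2 \<le> Re (k^2) + d1 * \<bar>Im (k^2)\<bar> \<longrightarrow>
            m \<le> cmod (Ff a k) \<and> cmod (Ff a k) \<le> M)"
proof -
  define p0 where "p0 = 1 / (2 + 4 * d1)"
  have p0: "p0 > 0" using d1 by (simp add: p0_def)
  define B where "B = 1 + 2 / (exp (p0 * a) - 1)"
  have e1: "exp (p0 * a) > 1" using p0 a by simp
  have "2 / (exp (p0 * a) - 1) > 0" using e1 by (intro divide_pos_pos) auto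
  then have B: "B > 0" unfolding B_def by linarith
  have frac: "2 * cmod (exp (k * of_real a) - 1) / (cmod k * cmod (1 + exp (k * of_real a))) \<le> 2 * B / cmod k"
    if k: "Re k \<ge> p0" for k
  proof -
    define R where "R = exp (Re k * a)"
    have R: "R \<ge> exp (p0 * a)" using k a by (simp add: R_def mult_right_mono)
    have R1: "R > 1" using R e1 by linarith
    have nE: "cmod (exp (k * of_real a)) = R" by (simp add: R_def)
    have n1: "cmod (exp (k * of_real a) - 1) \<le> R + 1"
      using norm_triangle_ineq4[of "exp (k * of_real a)" 1] nE by simp
    have n2: "cmod (1 + exp (k * of_real a)) \<ge> R - 1"
      using norm_diff_ineq[of "exp (k * of_real a)" 1] nE by (simp add: add.commute)
    have kpos: "cmod k > 0" using k p0 by auto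
    have "(R + 1) / (R - 1) = 1 + 2 / (R - 1)" using R1 by (simp add: field_simps)
    also have "\<dots> \<le> B" unfolding B_def using R e1 R1
      by (intro add_left_mono divide_left_mono) auto
    finally have RB: "(R + 1) / (R - 1) \<le> B" .
    have num: "2 * cmod (exp (k * of_real a) - 1) \<le> 2 * (R + 1)" using n1 by simp
    have den: "cmod k * (R - 1) \<le> cmod k * cmod (1 + exp (k * of_real a))"
      using n2 kpos by (simp add: mult_left_mono)
    have dpos: "0 < cmod k * (R - 1)" using kpos R1 by simp
    have "2 * cmod (exp (k * of_real a) - 1) / (cmod k * cmod (1 + exp (k * of_real a)))
        \<le> 2 * (R + 1) / (cmod k * (R - 1))"
      by (rule frac_le[OF _ num dpos den]) (use R1 in simp)
    also have "\<dots> = (2 * ((R + 1) / (R - 1))) / cmod k" using R1 kpos by (simp add: field_simps)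
    also have "\<dots> \<le> 2 * B / cmod k"
    proof (rule divide_right_mono)
      show "2 * ((R + 1) / (R - 1)) \<le> 2 * B" using RB by linarith
    qed (use kpos in simp)
    finally show ?thesis .
  qed
  have Fle: "cmod (Ff a k) \<le> a + 2 * B / cmod k" and Fge: "cmod (Ff a k) \<ge> a - 2 * B / cmod k"
    if k: "Re k \<ge> p0" for k
  proof -
    have "cmod (2 * (exp (k * of_real a) - 1) / (k * (1 + exp (k * of_real a))))
       = 2 * cmod (exp (k * of_real a) - 1) / (cmod k * cmod (1 + exp (k * of_real a)))"
      by (simp only: norm_divide norm_mult norm_numeral)
    also have "\<dots> \<le> 2 * B / cmod k" using frac[OF k] .
    finally have X: "cmod (2 * (exp (k * of_real a) - 1) / (k * (1 + exp (k * of_real a)))) \<le> 2 * B / cmod k" .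
    show "cmod (Ff a k) \<le> a + 2 * B / cmod k"
      unfolding Ff_def using norm_triangle_ineq4[of "complex_of_real a"] X a by (smt (verit) norm_of_real)
    show "cmod (Ff a k) \<ge> a - 2 * B / cmod k"
      unfolding Ff_def using norm_triangle_ineq2[of "complex_of_real a"] X a by (smt (verit) norm_of_real)
  qed
  define K0 where "K0 = 4 * B / a"
  define S where "S = cball 0 K0 \<inter> {k. 0 \<le> Re k \<and> 1/2 \<le> Re (k^2) + d1 * \<bar>Im (k^2)\<bar>}"
  have Sreg: "Re k \<ge> p0" if "k \<in> S" for k
    using region(1)[OF d1] that unfolding S_def p0_def by auto
  have Snz: "k \<noteq> 0" "1 + exp (k * of_real a) \<noteq> 0" if "k \<in> S" for k
  proof -
    have "Re k > 0" using Sreg[OF that] p0 by simp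
    then show "k \<noteq> 0" by auto
    have "cmod (exp (k * of_real a)) > 1" using \<open>Re k > 0\<close> a by simp
    then show "1 + exp (k * of_real a) \<noteq> 0"
      by (metis add_eq_0_iff norm_minus_cancel norm_one less_irrefl)
  qed
  have Fnz: "Ff a k \<noteq> 0" if "k \<in> S" for k
    unfolding Ff_def using F_nonzero[OF a] Sreg[OF that] p0 by simp
  have cS: "compact S" unfolding S_def
    by (intro compact_Int_closed compact_cball closed_Collect_conj closed_Collect_le continuous_intros)
  have contS: "continuous_on S (\<lambda>k. cmod (Ff a k))"
    unfolding Ff_def using Snz by (intro continuous_intros) auto
  obtain m0 where m0: "m0 > 0" "\<And>k. k \<in> S \<Longrightarrow> m0 \<le> cmod (Ff a k)"
  proof (cases "S = {}")
    case True then show ?thesis using that[of 1] by auto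
  next
    case False
    from continuous_attains_inf[OF cS False contS] obtain k0 where
      "k0 \<in> S" "\<And>k. k \<in> S \<Longrightarrow> cmod (Ff a k0) \<le> cmod (Ff a k)" by blast
    then show ?thesis using that[of "cmod (Ff a k0)"] Fnz by auto
  qed
  show ?thesis
  proof (rule exI[of _ "min m0 (a/2)"], rule exI[of _ "a + 2 * B / p0"], intro conjI allI impI)
    show "0 < min m0 (a/2)" using m0 a by simp
    have "2 * B / p0 > 0" using B p0 by (intro divide_pos_pos) auto
    then show "0 < a + 2 * B / p0" using a by linarith
    fix k :: complex assume k0: "Re k \<ge> 0" and r: "1/2 \<le> Re (k^2) + d1 * \<bar>Im (k^2)\<bar>"
    have kp: "Re k \<ge> p0" using region(1)[OF d1 k0 r] by (simp add: p0_def)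
    have ck: "cmod k \<ge> p0" using kp complex_Re_le_cmod[of k] by linarith
    show "cmod (Ff a k) \<le> a + 2 * B / p0"
    proof -
      have ckp: "cmod k > 0" using ck p0 by linarith
      have "0 < cmod k * p0" using ckp p0 by (rule mult_pos_pos)
      then have "2 * B / cmod k \<le> 2 * B / p0" using ck B p0 by (intro divide_left_mono) auto
      then show ?thesis using Fle[OF kp] by linarith
    qed
    show "min m0 (a/2) \<le> cmod (Ff a k)"
    proof (cases "cmod k \<le> K0")
      case True
      then have "k \<in> S" unfolding S_def using k0 r by auto
      then show ?thesis using m0 by fastforce
    next
      case False
      then have kK: "cmod k > K0" by simp
      have K0p: "K0 > 0" using B a by (simp add: K0_def)
      have "0 < cmod k * K0" using kK K0p by (intro mult_pos_pos) auto
      then have "2 * B / cmod k \<le> 2 * B / K0" using B kK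
        by (intro divide_left_mono) auto
      also have "\<dots> = a / 2" using B a by (simp add: K0_def)
      finally show ?thesis using Fge[OF kp] by simp
    qed
  qed
qed

lemma integral_sol:
  fixes k w :: complex and a :: real
  assumes a: "a > 0" and k: "Re k > 0" and w0: "w \<noteq> 0"
  shows "integral {0..a} (\<lambda>x. (1 - (exp (k * of_real x) + exp (k * (of_real a - of_real x))) / (1 + exp (k * of_real a))) / w)
       = (of_real a - 2 * (exp (k * of_real a) - 1) / (k * (1 + exp (k * of_real a)))) / w"
proof -
  define D where "D = 1 + exp (k * of_real a)"
  have k0: "k \<noteq> 0" using k by auto
  have D0: "D \<noteq> 0"
  proof
    assume "D = 0"
    then have "exp (k * of_real a) = -1" unfolding D_def by (simp add: add_eq_0_iff)
    then have "cmod (exp (k * of_real a)) = 1" by simp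
    moreover have "cmod (exp (k * of_real a)) > 1" using a k by simp
    ultimately show False by linarith
  qed
  define P where "P c = (c - (exp (k * c) - exp (k * (of_real a - c))) / (k * D)) / w" for c
  have dP: "(P has_field_derivative (1 - (exp (k * c) + exp (k * (of_real a - c))) / D) / w) (at c)" for c
    unfolding P_def using k0 D0 w0 by (auto intro!: derivative_eq_intros simp: field_simps)
  have "((\<lambda>x. (1 - (exp (k * of_real x) + exp (k * (of_real a - of_real x))) / D) / w) has_integral
        (P (of_real a) - P (of_real 0))) {0..a}"
    by (rule fundamental_theorem_of_calculus) (use a has_vector_derivative_real_field[OF dP] in auto)
  moreover have "P (of_real a) - P (of_real 0) = (of_real a - 2 * (exp (k * of_real a) - 1) / (k * D)) / w"
    unfolding P_def using k0 D0 w0 by (simp add: field_simps)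
  ultimately have "((\<lambda>x. (1 - (exp (k * of_real x) + exp (k * (of_real a - of_real x))) / D) / w) has_integral
        ((of_real a - 2 * (exp (k * of_real a) - 1) / (k * D)) / w)) {0..a}" by (simp only:)
  then show ?thesis unfolding D_def by (rule integral_unique)
qed

theorem lemma10:
  fixes a nu d1 d2 :: real
  assumes "a > 0" and "nu > 0" and "d1 > 0"
    and "d2 < min (nu * pi^2 / (2 * a^2)) (nu / 2)"
  shows "\<exists>C1 C2. C1 > 0 \<and> C2 > 0 \<and>
    (\<forall>lam \<in> sectorS d1 d2. \<forall>z :: int \<times> int. z \<noteq> (0, 0) \<longrightarrow>
       (\<exists>g. dirichlet_sol a nu (omega_sq nu lam z) g) \<and>
       (\<forall>g. dirichlet_sol a nu (omega_sq nu lam z) g \<longrightarrow>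
          C1 / jbr_omega_sq lam z \<le> cmod (integral {0..a} g) \<and>
          cmod (integral {0..a} g) \<le> C2 / jbr_omega_sq lam z))"
proof -
  note a = assms(1) and nu = assms(2) and d1 = assms(3)
  have d2: "d2 < nu / 2" using assms(4) by simp
  obtain m M where mM: "0 < m" "0 < M"
    "\<And>k. Re k \<ge> 0 \<Longrightarrow> 1/2 \<le> Re (k^2) + d1 * \<bar>Im (k^2)\<bar> \<Longrightarrow> m \<le> cmod (Ff a k) \<and> cmod (Ff a k) \<le> M"
    using F_bounds[OF a d1] by blast
  define c2 where "c2 = max 1 nu"
  define L where "L = 1 + (nu + 4) * (2 * (1 + d1) / nu)"
  have c2: "c2 > 0" by (simp add: c2_def)
  have "(nu + 4) * (2 * (1 + d1) / nu) > 0" using nu d1 by (intro mult_pos_pos divide_pos_pos) auto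
  then have L: "L > 0" unfolding L_def by linarith
  show ?thesis
  proof (rule exI[of _ "m / c2"], rule exI[of _ "M * L"], intro conjI ballI allI impI)
    show "0 < m / c2" using mM c2 by simp
    show "0 < M * L" using mM L by simp
    fix lam z assume lam: "lam \<in> sectorS d1 d2" and z: "z \<noteq> ((0::int), (0::int))"
    obtain mu1 mu2 where lm: "lam = complex_of_real (- d2 - mu1) + \<i> * complex_of_real mu2"
      and mu: "\<bar>mu2\<bar> \<ge> mu1 / d1"
      using lam unfolding sectorS_def by blast
    have mu': "mu1 \<le> d1 * \<bar>mu2\<bar>" using mu d1 by (simp add: field_simps)
    define Z where "Z = zeta_sq z"
    have Z1: "Z \<ge> 1"
    proof -
      obtain u v where uv: "z = (u, v)" by (cases z)
      have "u \<noteq> 0 \<or> v \<noteq> 0" using z uv by auto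
      then have "u^2 \<ge> 1 \<or> v^2 \<ge> 1"
        by (metis one_le_power abs_ge_zero int_one_le_iff_zero_less zero_less_abs_iff power2_abs)
      then have "real_of_int u ^ 2 \<ge> 1 \<or> real_of_int v ^ 2 \<ge> 1"
        by (metis of_int_1_le_iff of_int_power)
      then show ?thesis unfolding Z_def zeta_sq_def uv by (auto intro: add_increasing add_increasing2)
    qed
    define w where "w = omega_sq nu lam z"
    have wl: "w = lam + of_real (nu * Z)" by (simp add: w_def omega_sq_def Z_def)
    have Rew: "Re w = - d2 - mu1 + nu * Z" and Imw: "Im w = mu2" by (simp_all add: wl lm)
    have hw: "Re w + d1 * \<bar>Im w\<bar> \<ge> nu * Z - d2" using Rew Imw mu' by simp
    have nuZ: "nu * Z \<ge> nu" using Z1 nu by simp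
    have hw2: "Re w + d1 * \<bar>Im w\<bar> \<ge> nu / 2" using hw nuZ d2 by linarith
    have hw3: "Re w + d1 * \<bar>Im w\<bar> \<ge> nu * Z / 2" using hw nuZ d2 by linarith
    define k where "k = csqrt (w / of_real nu)"
    have k2: "k^2 = w / of_real nu" by (simp add: k_def)
    have kw: "of_real nu * k^2 = w" using nu by (simp add: k2)
    have kre: "Re k \<ge> 0" unfolding k_def by (rule Re_csqrt)
    have reg: "1/2 \<le> Re (k^2) + d1 * \<bar>Im (k^2)\<bar>"
    proof -
      have "Re (k^2) + d1 * \<bar>Im (k^2)\<bar> = (Re w + d1 * \<bar>Im w\<bar>) / nu"
        using nu by (simp add: k2 field_simps abs_div)
      moreover have "(Re w + d1 * \<bar>Im w\<bar>) / nu \<ge> 1/2" using hw2 nu by (simp add: field_simps)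
      ultimately show ?thesis by simp
    qed
    have kpos: "Re k > 0"
    proof -
      have "Re k \<ge> 1 / (2 + 4 * d1)" using region(1)[OF d1 kre reg] .
      moreover have "1 / (2 + 4 * d1) > 0" using d1 by simp
      ultimately show ?thesis by linarith
    qed
    have wn: "cmod w \<ge> nu * Z / (2 * (1 + d1))"
    proof -
      have "Re w + d1 * \<bar>Im w\<bar> \<le> cmod w + d1 * cmod w"
        using complex_Re_le_cmod[of w] abs_Im_le_cmod[of w] d1 by (smt (verit) mult_left_mono)
      then have "nu * Z / 2 \<le> cmod w * (1 + d1)" using hw3 by (simp add: algebra_simps)
      then show ?thesis using d1 by (simp add: field_simps)
    qed
    have w0: "w \<noteq> 0" using wn nu Z1 d1
      by (smt (verit) divide_pos_pos mult_pos_pos norm_zero)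
    have wpos: "cmod w > 0" using w0 by simp
    define J where "J = jbr_omega_sq lam z"
    have J: "J = cmod lam + (1 + sqrt Z)^2" by (simp add: J_def jbr_omega_sq_def jbr_zeta_def Z_def)
    have sZ: "sqrt Z \<le> Z"
    proof -
      have s1: "sqrt Z \<ge> 1" using Z1 by simp
      then have "sqrt Z * 1 \<le> sqrt Z * sqrt Z" by (intro mult_left_mono) auto
      also have "\<dots> = Z" using Z1 by simp
      finally show ?thesis by simp
    qed
    have sq: "(1 + sqrt Z)^2 \<le> 4 * Z"
    proof -
      have "(1 + sqrt Z)^2 = 1 + 2 * sqrt Z + Z" using Z1 by (simp add: power2_eq_square algebra_simps)
      then show ?thesis using sZ Z1 by linarith
    qed
    have sq2: "Z \<le> (1 + sqrt Z)^2"
    proof -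
      have "(1 + sqrt Z)^2 = 1 + 2 * sqrt Z + Z" using Z1 by (simp add: power2_eq_square algebra_simps)
      then show ?thesis using Z1 by simp
    qed
    have lamn: "cmod lam \<le> cmod w + nu * Z"
    proof -
      have "lam = w - of_real (nu * Z)" by (simp add: wl)
      then have "cmod lam \<le> cmod w + cmod (of_real (nu * Z) :: complex)"
        using norm_triangle_ineq4 by metis
      moreover have "cmod (of_real (nu * Z) :: complex) = nu * Z" using nu Z1 by (simp only: norm_of_real) simp
      ultimately show ?thesis by linarith
    qed
    have nZ: "cmod (of_real (nu * Z) :: complex) = nu * Z" using nu Z1 by (simp only: norm_of_real) simp
    have wlam: "cmod w \<le> cmod lam + nu * Z"
      using norm_triangle_ineq[of lam "of_real (nu * Z)"] nZ unfolding wl by linarith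
    have Jup: "J \<le> L * cmod w"
    proof -
      have Zw: "Z \<le> 2 * (1 + d1) / nu * cmod w" using wn nu d1 by (simp add: field_simps)
      have "J \<le> cmod w + nu * Z + 4 * Z" using J lamn sq by linarith
      also have "\<dots> = cmod w + (nu + 4) * Z" by (simp add: algebra_simps)
      also have "\<dots> \<le> cmod w + (nu + 4) * (2 * (1 + d1) / nu * cmod w)"
        using Zw nu by (intro add_left_mono mult_left_mono) auto
      also have "\<dots> = L * cmod w" by (simp add: L_def algebra_simps)
      finally show ?thesis .
    qed
    have Jlow: "cmod w \<le> c2 * J"
    proof -
      have "cmod w \<le> cmod lam + nu * Z" by (rule wlam)
      also have "\<dots> \<le> c2 * cmod lam + c2 * Z"
      proof (rule add_mono)
        have "1 * cmod lam \<le> c2 * cmod lam" by (rule mult_right_mono) (auto simp: c2_def)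
        then show "cmod lam \<le> c2 * cmod lam" by simp
        show "nu * Z \<le> c2 * Z" using Z1 by (intro mult_right_mono) (auto simp: c2_def)
      qed
      also have "\<dots> \<le> c2 * J" using J sq2 c2 by (simp add: ring_distribs)
      finally show ?thesis .
    qed
    have "c2 * J > 0" using Jlow wpos by linarith
    then have Jpos: "J > 0" using c2 zero_less_mult_pos by blast
    define G where "G x = (1 - (exp (k * of_real x) + exp (k * (of_real a - of_real x))) / (1 + exp (k * of_real a))) / w" for x
    have Gsol: "dirichlet_sol a nu w G"
      unfolding G_def by (rule explicit_sol[OF a nu kw kpos])
    show "\<exists>g. dirichlet_sol a nu (omega_sq nu lam z) g" using Gsol by (auto simp: w_def)
    fix g assume "dirichlet_sol a nu (omega_sq nu lam z) g"
    then have gsol: "dirichlet_sol a nu w g" by (simp add: w_def)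
    have "integral {0..a} g = integral {0..a} G"
      by (rule integral_cong) (rule dir_unique[OF a nu kw kpos gsol Gsol])
    also have "\<dots> = Ff a k / w" unfolding G_def Ff_def by (rule integral_sol[OF a kpos w0])
    finally have Ig: "cmod (integral {0..a} g) = cmod (Ff a k) / cmod w" by (simp add: norm_divide)
    have FmM: "m \<le> cmod (Ff a k)" "cmod (Ff a k) \<le> M" using mM(3)[OF kre reg] by auto
    show "m / c2 / jbr_omega_sq lam z \<le> cmod (integral {0..a} g)"
    proof -
      have "m / c2 / J = m / (c2 * J)" by simp
      also have "\<dots> \<le> m / cmod w"
      proof (rule divide_left_mono)
        show "cmod w \<le> c2 * J" by (rule Jlow)
        show "0 \<le> m" using mM by simp
        show "0 < c2 * J * cmod w" using c2 Jpos wpos by simp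
      qed
      also have "\<dots> \<le> cmod (Ff a k) / cmod w" using FmM wpos by (intro divide_right_mono) auto
      finally show ?thesis using Ig by (simp add: J_def)
    qed
    show "cmod (integral {0..a} g) \<le> M * L / jbr_omega_sq lam z"
    proof -
      have "cmod (integral {0..a} g) \<le> M / cmod w" using Ig FmM wpos by (simp add: divide_right_mono)
      also have "\<dots> \<le> M * L / J"
        using Jup Jpos wpos mM L by (simp add: field_simps)
      finally show ?thesis by (simp add: J_def)
    qed
  qed
qed

end
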